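(* Let $M$ be a real symmetric $n \times n$ matrix whose diagonal entries are all $0$ and whose off-diagonal entries each lie in $\{0, 1, -1\}$. Let $e$ be an eigenvalue of $M$ of multiplicity at least $m$, where $m \ge 1$. Then $e^2 \le (n-1)(n-m)/m$. *)

theory Defs
  imports "Jordan_Normal_Form.Char_Poly"
begin

end

theory Submission imports Defs "Jordan_Normal_Form.Schur_Decomposition" begin
hide_const (open) Coset.order
lemma split_sum_count:
  fixes f :: "real \<Rightarrow> real"
  shows "sum_list (map f rs) = real (count_list rs e) * f e + sum_list (map f (filter (\<lambda>x. x \<noteq> e) rs))"
  by (induction rs) (auto simp: algebra_simps)

lemma length_split_count: "length rs = count_list rs e + length (filter (\<lambda>x. x \<noteq> e) rs)"
  by (induction rs) auto

lemma sq_dev_expand: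
  fixes os :: "real list"
  shows "sum_list (map (\<lambda>x. (x - c)^2) os) = sum_list (map (\<lambda>x. x^2) os) - 2*c*sum_list os + real (length os) * c^2"
  by (induction os) (auto simp: algebra_simps power2_eq_square)

lemma cs_list:
  fixes os :: "real list"
  shows "(sum_list os)^2 \<le> real (length os) * sum_list (map (\<lambda>x. x^2) os)"
proof (cases "length os = 0")
  case True then show ?thesis by simp
next
  case False
  define L where "L = real (length os)"
  define s where "s = sum_list os"
  define Q where "Q = sum_list (map (\<lambda>x. x^2) os)"
  have L: "L > 0" using False L_def by simp
  have "0 \<le> sum_list (map (\<lambda>x. (x - s/L)^2) os)" by (induction os) auto
  also have "\<dots> = Q - 2*(s/L)*s + L*(s/L)^2" unfolding sq_dev_expand Q_def s_def L_def ..
  also have "\<dots> = Q - s^2/L" using L by (simp add: field_simps power2_eq_square)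
  finally have "s^2/L \<le> Q" by simp
  then have "s^2 \<le> L * Q" using L by (simp add: field_simps)
  then show ?thesis unfolding s_def L_def Q_def .
qed

lemma arith_final:
  fixes rs :: "real list" and e :: real
  assumes s0: "sum_list rs = 0"
    and sq: "sum_list (map (\<lambda>r. r^2) rs) \<le> real (length rs) * (real (length rs) - 1)"
    and cnt: "count_list rs e \<ge> m" and m1: "m \<ge> 1"
  shows "e^2 \<le> (real (length rs) - 1) * (real (length rs) - real m) / real m"
proof -
  define os where "os = filter (\<lambda>x. x \<noteq> e) rs"
  define k where "k = real (count_list rs e)"
  define L where "L = real (length os)"
  define n where "n = real (length rs)"
  define Q where "Q = sum_list (map (\<lambda>x. x^2) os)"
  have nkL: "n = k + L" unfolding n_def k_def L_def os_def using length_split_count[of rs e] by simp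
  have sum: "k * e + sum_list os = 0" using split_sum_count[of id rs e] s0 unfolding k_def os_def by simp
  have sqs: "k * e^2 + Q \<le> n * (n - 1)" using split_sum_count[of "\<lambda>r. r^2" rs e] sq unfolding k_def os_def Q_def n_def by simp
  have cs: "(sum_list os)^2 \<le> L * Q" using cs_list[of os] unfolding L_def Q_def .
  have km: "k \<ge> real m" using cnt k_def by simp
  have m0: "real m \<ge> 1" using m1 by simp
  have L0: "L \<ge> 0" unfolding L_def by simp
  have goal: "real m * e^2 \<le> (n - 1) * (n - real m)"
  proof (cases "L = 0")
    case True
    then have "os = []" unfolding L_def by simp
    then have "sum_list os = 0" by simp
    then have "e = 0" using sum km m0 by simp
    then show ?thesis using nkL True km m0 by simp
  next
    case False
    then have Lp: "L > 0" using L0 by simp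
    have "k^2 * e^2 \<le> L * Q" using cs sum by (metis add.commute add_eq_0_iff2 power_mult_distrib power2_minus)
    then have "L * (k * e^2) + k^2 * e^2 \<le> L * (n * (n - 1))"
      using sqs Lp by (smt (verit) mult_left_mono distrib_left)
    then have "k * e^2 * n \<le> L * (n - 1) * n" using nkL by (simp add: algebra_simps power2_eq_square)
    then have A: "k * e^2 \<le> L * (n - 1)" using nkL Lp km m0 by (smt (verit) mult_le_cancel_right)
    have B1: "L * real m \<le> L * k" using km L0 by (rule mult_left_mono)
    have B2: "real m * k \<le> k * k" using km m0 by (simp add: mult_right_mono)
    have B: "real m * L \<le> k * (n - real m)" using nkL B1 B2 by (simp add: algebra_simps)
    have n1: "n - 1 \<ge> 0" using nkL km m0 L0 by simp
    have "k * (real m * e^2) = real m * (k * e^2)" by simp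
    also have "\<dots> \<le> real m * (L * (n - 1))" using A m0 by simp
    also have "\<dots> = (real m * L) * (n - 1)" by simp
    also have "\<dots> \<le> k * (n - real m) * (n - 1)" using B n1 by (rule mult_right_mono)
    finally have "k * (real m * e^2) \<le> k * ((n - 1) * (n - real m))" by (simp add: algebra_simps)
    then show ?thesis using km m0 by (smt (verit) mult_le_cancel_left)
  qed
  show ?thesis using goal m0 unfolding n_def by (simp add: field_simps)
qed
lemma order_linear_prod:
  fixes rs :: "'a::idom list"
  shows "order e (\<Prod>r\<leftarrow>rs. [:- r, 1:]) = count_list rs e"
proof (induction rs)
  case Nil then show ?case by (simp add: order_0I)
next
  case (Cons r rs)
  have mon: "monic (\<Prod>r\<leftarrow>rs. [:- r, 1:])" by (rule monic_prod_list, auto)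
  then have nz0: "(\<Prod>r\<leftarrow>rs. [:- r, 1:]) \<noteq> 0" by (metis leading_coeff_0_iff zero_neq_one)
  have nz: "[:- r, 1:] * (\<Prod>r\<leftarrow>rs. [:- r, 1:]) \<noteq> 0"
    by (rule no_zero_divisors) (simp, rule nz0)
  have o1: "order e [:- r, 1:] = (if r = e then 1 else 0)"
  proof (cases "r = e")
    case True then show ?thesis using order_power_n_n[of e 1] by simp
  next
    case False then show ?thesis by (simp add: order_0I)
  qed
  show ?case using order_mult[OF nz, of e] o1 Cons by simp
qed

definition tr :: "nat \<Rightarrow> 'a::comm_ring_1 mat \<Rightarrow> 'a" where
  "tr n X = (\<Sum>i = 0..<n. X $$ (i, i))"

lemma tr_comm:
  assumes X: "X \<in> carrier_mat n n" and Y: "Y \<in> carrier_mat n n"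
  shows "tr n (X * Y) = tr n (Y * X)"
proof -
  have "tr n (X * Y) = (\<Sum>i = 0..<n. \<Sum>j = 0..<n. X $$ (i, j) * Y $$ (j, i))"
    unfolding tr_def using X Y by (auto simp: scalar_prod_def intro!: sum.cong)
  also have "\<dots> = (\<Sum>j = 0..<n. \<Sum>i = 0..<n. Y $$ (j, i) * X $$ (i, j))"
    by (subst sum.swap) (simp add: mult.commute)
  also have "\<dots> = tr n (Y * X)"
    unfolding tr_def using X Y by (auto simp: scalar_prod_def intro!: sum.cong)
  finally show ?thesis .
qed

lemma tr_sim:
  assumes "A = P * B * Q" "Q * P = 1\<^sub>m n" and B: "B \<in> carrier_mat n n"
    and P: "P \<in> carrier_mat n n" and Q: "Q \<in> carrier_mat n n"
  shows "tr n A = tr n B"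
proof -
  have "tr n A = tr n (Q * (P * B))" using assms tr_comm[of "P*B" n Q] by auto
  also have "Q * (P * B) = (Q * P) * B" using assoc_mult_mat[OF Q P B] by simp
  also have "\<dots> = B" using assms by simp
  finally show ?thesis .
qed

lemma tr_upper_sq:
  assumes B: "B \<in> carrier_mat n n" and ut: "upper_triangular B"
  shows "tr n (B * B) = (\<Sum>i = 0..<n. (B $$ (i, i))^2)"
  unfolding tr_def
proof (rule sum.cong[OF refl])
  fix i assume i: "i \<in> {0..<n}"
  have "(B * B) $$ (i, i) = (\<Sum>j = 0..<n. B $$ (i, j) * B $$ (j, i))"
    using B i by (auto simp: scalar_prod_def intro!: sum.cong)
  also have "\<dots> = (\<Sum>j \<in> {i}. B $$ (i, j) * B $$ (j, i))"
  proof (rule sum.mono_neutral_right)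
    show "\<forall>j\<in>{0..<n} - {i}. B $$ (i, j) * B $$ (j, i) = 0"
    proof
      fix j assume j: "j \<in> {0..<n} - {i}"
      show "B $$ (i, j) * B $$ (j, i) = 0"
      proof (cases "j < i")
        case True then show ?thesis using ut B i by (auto simp: upper_triangular_def)
      next
        case False then have "i < j" using j by auto
        then show ?thesis using ut B j by (auto simp: upper_triangular_def)
      qed
    qed
  qed (use i in auto)
  also have "\<dots> = (B $$ (i, i))^2" by (simp add: power2_eq_square)
  finally show "(B * B) $$ (i, i) = (B $$ (i, i))^2" .
qed

lemma real_eigen:
  fixes M :: "real mat"
  assumes M: "M \<in> carrier_mat n n" and sym: "transpose_mat M = M"
    and root: "poly (char_poly (map_mat complex_of_real M)) a = 0"
  shows "a = complex_of_real (Re a)"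
proof -
  let ?A = "map_mat complex_of_real M"
  have A: "?A \<in> carrier_mat n n" using M by auto
  have "eigenvalue ?A a" using eigenvalue_root_char_poly[OF A] root by simp
  then obtain v where v: "v \<in> carrier_vec n" "v \<noteq> 0\<^sub>v n" "?A *\<^sub>v v = a \<cdot>\<^sub>v v"
    unfolding eigenvalue_def eigenvector_def using A by auto
  have symM: "M $$ (i, j) = M $$ (j, i)" if "i < n" "j < n" for i j
  proof -
    have "M $$ (i, j) = transpose_mat M $$ (i, j)" using sym by simp
    also have "\<dots> = M $$ (j, i)" using M that by simp
    finally show ?thesis .
  qed
  define S where "S = (\<Sum>i = 0..<n. \<Sum>j = 0..<n. cnj (v$i) * (complex_of_real (M$$(i,j)) * v$j))"
  define N where "N = (\<Sum>i = 0..<n. (Re (v$i))^2 + (Im (v$i))^2)"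
  have rowi: "(\<Sum>j = 0..<n. complex_of_real (M$$(i,j)) * v$j) = a * v$i" if i: "i < n" for i
  proof -
    have "(?A *\<^sub>v v) $ i = a * v$i" using v(3) i v(1) by simp
    moreover have "(?A *\<^sub>v v) $ i = (\<Sum>j = 0..<n. complex_of_real (M$$(i,j)) * v$j)"
      using i A M v(1) by (auto simp: scalar_prod_def intro!: sum.cong)
    ultimately show ?thesis by simp
  qed
  have S1: "S = a * complex_of_real N"
  proof -
    have "S = (\<Sum>i = 0..<n. cnj (v$i) * (a * v$i))"
      unfolding S_def by (intro sum.cong refl, simp add: sum_distrib_left[symmetric] rowi)
    also have "\<dots> = a * (\<Sum>i = 0..<n. cnj (v$i) * v$i)"
      by (simp add: sum_distrib_left algebra_simps)
    also have "(\<Sum>i = 0..<n. cnj (v$i) * v$i) = complex_of_real N"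
      unfolding N_def of_real_sum by (intro sum.cong refl) (subst mult.commute, rule complex_mult_cnj)
    finally show ?thesis .
  qed
  have S2: "cnj S = S"
  proof -
    have "cnj S = (\<Sum>i = 0..<n. \<Sum>j = 0..<n. v$i * (complex_of_real (M$$(i,j)) * cnj (v$j)))"
      unfolding S_def by (simp add: cnj_sum)
    also have "\<dots> = (\<Sum>j = 0..<n. \<Sum>i = 0..<n. v$i * (complex_of_real (M$$(i,j)) * cnj (v$j)))"
      by (rule sum.swap)
    also have "\<dots> = S" unfolding S_def
      by (intro sum.cong refl) (simp add: symM mult.commute mult.left_commute)
    finally show ?thesis .
  qed
  have "\<exists>i<n. v $ i \<noteq> 0"
  proof (rule ccontr)
    assume "\<not> ?thesis"
    then have "v = 0\<^sub>v n" using v(1) by (intro eq_vecI) auto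
    with v(2) show False by simp
  qed
  then obtain i where i: "i < n" "v $ i \<noteq> 0" by auto
  have Npos: "N > 0" unfolding N_def
    by (rule sum_pos2[of _ i]) (use i in \<open>auto simp: complex_eq_iff sum_power2_gt_zero_iff\<close>)
  have "cnj a * complex_of_real N = a * complex_of_real N" using S1 S2 by simp
  then have "cnj a = a" using Npos by simp
  then have "Im a = 0" by (simp add: complex_eq_iff)
  then show ?thesis by (simp add: complex_eq_iff)
qed

theorem lemma2p3:
  fixes M :: "real mat" and n m :: nat and e :: real
  assumes "M \<in> carrier_mat n n"
    and "transpose_mat M = M"
    and "\<And>i. i < n \<Longrightarrow> M $$ (i, i) = 0"
    and "\<And>i j. i < n \<Longrightarrow> j < n \<Longrightarrow> i \<noteq> j \<Longrightarrow> M $$ (i, j) \<in> {0, 1, -1}"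
    and "m \<ge> 1"
    and "order e (char_poly M) \<ge> m"
  shows "e ^ 2 \<le> (real n - 1) * (real n - real m) / real m"
proof -
  note Mc = assms(1)
  let ?A = "map_mat complex_of_real M"
  have A: "?A \<in> carrier_mat n n" using Mc by simp
  obtain as where as: "char_poly ?A = (\<Prod>a\<leftarrow>as. [:-a,1:])" "length as = n"
    using char_poly_factorized[OF A] by blast
  have real: "a = complex_of_real (Re a)" if "a \<in> set as" for a
  proof -
    have "poly (char_poly ?A) a = 0" unfolding as(1) using that
      by (simp add: poly_prod_list prod_list_zero_iff)
    then show ?thesis by (rule real_eigen[OF Mc assms(2)])
  qed
  define rs where "rs = map Re as"
  have "map (complex_of_real \<circ> Re) as = as" by (rule map_idI) (use real in auto)
  then have as_rs: "as = map complex_of_real rs" unfolding rs_def by simp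
  have lenrs: "length rs = n" unfolding rs_def using as(2) by simp
  interpret rp: map_poly_inj_idom_hom "complex_of_real" ..
  have cpM: "char_poly M = (\<Prod>r\<leftarrow>rs. [:-r,1:])"
  proof (rule rp.injectivity)
    show "map_poly complex_of_real (char_poly M) = map_poly complex_of_real (\<Prod>r\<leftarrow>rs. [:-r,1:])"
      unfolding of_real_hom.char_poly_hom[OF Mc, symmetric] as(1) as_rs rp.hom_prod_list
      by (simp add: o_def hom_distribs)
  qed
  obtain B P Q where sch: "schur_decomposition M rs = (B,P,Q)"
    by (cases "schur_decomposition M rs") auto
  from schur_decomposition[OF Mc cpM sch] have sw: "similar_mat_wit M B P Q"
    and ut: "upper_triangular B" and dg: "diag_mat B = rs" by auto
  note D = similar_mat_witD2[OF Mc sw]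
  have B: "B \<in> carrier_mat n n" and P: "P \<in> carrier_mat n n" and Q: "Q \<in> carrier_mat n n"
    using D by auto
  have "M ^\<^sub>m 2 = P * B ^\<^sub>m 2 * Q" by (rule similar_mat_wit_pow_id[OF sw])
  moreover have "M ^\<^sub>m 2 = M * M" using Mc by (simp add: numeral_2_eq_2)
  moreover have "B ^\<^sub>m 2 = B * B" using B by (simp add: numeral_2_eq_2)
  ultimately have MM: "M * M = P * (B * B) * Q" by simp
  have t1: "tr n M = tr n B" by (rule tr_sim[OF D(3) D(2) B P Q])
  have t2: "tr n (M * M) = tr n (B * B)" by (rule tr_sim[OF MM D(2) _ P Q]) (use B in simp)
  have rsB: "rs ! i = B $$ (i, i)" if "i < n" for i
    using dg that B unfolding diag_mat_def by auto
  have trB: "tr n B = sum_list rs"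
    unfolding tr_def sum_list_sum_nth lenrs using rsB by simp
  have trBB: "tr n (B * B) = sum_list (map (\<lambda>r. r^2) rs)"
    unfolding tr_upper_sq[OF B ut] sum_list_sum_nth using lenrs rsB by simp
  have trM: "tr n M = 0" unfolding tr_def using assms(3) by simp
  have symM: "M $$ (i, j) = M $$ (j, i)" if "i < n" "j < n" for i j
  proof -
    have "M $$ (i, j) = transpose_mat M $$ (i, j)" using assms(2) by simp
    also have "\<dots> = M $$ (j, i)" using Mc that by simp
    finally show ?thesis .
  qed
  have diagMM: "(M * M) $$ (i, i) \<le> real n - 1" if i: "i < n" for i
  proof -
    have "(M * M) $$ (i, i) = (\<Sum>j = 0..<n. (M $$ (i, j))^2)"
      using Mc i by (auto simp: scalar_prod_def power2_eq_square symM intro!: sum.cong)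
    also have "\<dots> = (M $$ (i, i))^2 + (\<Sum>j \<in> {0..<n} - {i}. (M $$ (i, j))^2)"
      using i by (subst sum.remove[of _ i]) auto
    also have "\<dots> \<le> 0 + real (card ({0..<n} - {i})) * 1"
    proof (intro add_mono)
      show "(M $$ (i, i))^2 \<le> 0" using assms(3)[OF i] by simp
      show "(\<Sum>j \<in> {0..<n} - {i}. (M $$ (i, j))^2) \<le> real (card ({0..<n} - {i})) * 1"
      proof (rule sum_bounded_above)
        fix j assume "j \<in> {0..<n} - {i}"
        then have "M $$ (i, j) \<in> {0, 1, -1}" using assms(4)[OF i] by auto
        then show "(M $$ (i, j))^2 \<le> 1" by auto
      qed
    qed
    also have "\<dots> = real n - 1" using i by simp
    finally show ?thesis .
  qed
  have "tr n (M * M) \<le> (\<Sum>i = 0..<n. real n - 1)"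
    unfolding tr_def by (rule sum_mono) (use diagMM in auto)
  then have trMM: "tr n (M * M) \<le> real n * (real n - 1)" by simp
  have cnt: "count_list rs e \<ge> m" using assms(6) unfolding cpM order_linear_prod .
  show ?thesis
    using arith_final[where rs=rs and e=e and m=m] trB trBB trM trMM t1 t2 cnt assms(5) lenrs by simp
qed

end
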